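(* Let $X$ be a locally super-compact $L$-topological space. Then in the $L$-ordered set $({\rm pt}_L\mathcal O(X),{\rm sub}_{\mathcal O(X)})$, for every $x\in X$ the $L$-subset ${\Downarrow}[x]$ is directed and $[x]=\sqcup{\Downarrow}[x]$.
   Context: $L$ is a frame with implication $\to$. $L$-subsets: maps to $L$; nonempty: $\bigvee A=1$; ${\rm sub}_X(A,B)=\bigwedge_xA(x)\to B(x)$. $L$-topology: $\mathcal O(X)\subseteq L^X$ closed under finite meets and arbitrary joins containing all constants $a_X$; interior $A^\circ=\bigvee\{B\in\mathcal O(X):B\le A\}$. Super-compact: nonempty $A\in L^X$ with ${\rm sub}_X(A,\bigvee_iV_i)=\bigvee_i{\rm sub}_X(A,V_i)$ for every family of open $V_i$; ${\rm SC}(X)$ their set. Locally super-compact: each open $A=\bigvee_{B\in{\rm SC}(X)}{\rm sub}_X(B,A)\wedge B^\circ$. A point of $\mathcal O(X)$: $p:\mathcal O(X)\to L$ with $p(A\wedge B)=p(A)\wedge p(B)$, $p(\bigvee_iA_i)=\bigvee_ip(A_i)$, $p(\lambda_X)=\lambda$. ${\rm pt}_L\mathcal O(X)$ is the set of points, $L$-ordered by ${\rm sub}_{\mathcal O(X)}(p,q)=\bigwedge_{A\in\mathcal O(X)}p(A)\to q(A)$. $[x](A)=A(x)$. For an $L$-ordered set $(P,e)$: ${\downarrow}y(x)=e(x,y)$; $\sqcup A=x$ iff $e(x,y)={\rm sub}_P(A,{\downarrow}y)$ for all $y$; directed: nonempty and $D(x)\wedge D(y)\le\bigvee_zD(z)\wedge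 e(x,z)\wedge e(y,z)$; ideal: directed lower set ($I(x)\wedge e(y,x)\le I(y)$); ${\Downarrow}x(y)=\bigwedge\{e(x,\sqcup I)\to I(y):I\text{ ideal with a supremum}\}$. *)

theory Defs
  imports Main
begin

definition is_frame :: "('l::complete_lattice) itself \<Rightarrow> bool" where
  "is_frame _ \<longleftrightarrow> (\<forall>(a::'l) S. inf a (Sup S) = (SUP s\<in>S. inf a s))"

definition limp :: "'l::complete_lattice \<Rightarrow> 'l \<Rightarrow> 'l" where
  "limp a b = Sup {c. inf c a \<le> b}"

definition lsub :: "'p set \<Rightarrow> ('p \<Rightarrow> 'l::complete_lattice) \<Rightarrow> ('p \<Rightarrow> 'l) \<Rightarrow> 'l" where
  "lsub S A B = (INF x\<in>S. limp (A x) (B x))"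

definition ldown :: "('p \<Rightarrow> 'p \<Rightarrow> 'l) \<Rightarrow> 'p \<Rightarrow> ('p \<Rightarrow> 'l)" where
  "ldown e y = (\<lambda>x. e x y)"

definition is_lsup :: "'p set \<Rightarrow> ('p \<Rightarrow> 'p \<Rightarrow> 'l::complete_lattice) \<Rightarrow> ('p \<Rightarrow> 'l) \<Rightarrow> 'p \<Rightarrow> bool" where
  "is_lsup P e A s \<longleftrightarrow> s \<in> P \<and> (\<forall>y\<in>P. e s y = lsub P A (ldown e y))"

definition lnonempty :: "'p set \<Rightarrow> ('p \<Rightarrow> 'l::complete_lattice) \<Rightarrow> bool" where
  "lnonempty P A \<longleftrightarrow> (SUP x\<in>P. A x) = top"

definition ldirected :: "'p set \<Rightarrow> ('p \<Rightarrow> 'p \<Rightarrow> 'l::complete_lattice) \<Rightarrow> ('p \<Rightarrow> 'l) \<Rightarrow> bool" where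
  "ldirected P e D \<longleftrightarrow> lnonempty P D \<and>
     (\<forall>x\<in>P. \<forall>y\<in>P. inf (D x) (D y) \<le> (SUP z\<in>P. inf (inf (D z) (e x z)) (e y z)))"

definition llower :: "'p set \<Rightarrow> ('p \<Rightarrow> 'p \<Rightarrow> 'l::complete_lattice) \<Rightarrow> ('p \<Rightarrow> 'l) \<Rightarrow> bool" where
  "llower P e I \<longleftrightarrow> (\<forall>x\<in>P. \<forall>y\<in>P. inf (I x) (e y x) \<le> I y)"

definition lideal :: "'p set \<Rightarrow> ('p \<Rightarrow> 'p \<Rightarrow> 'l::complete_lattice) \<Rightarrow> ('p \<Rightarrow> 'l) \<Rightarrow> bool" where
  "lideal P e I \<longleftrightarrow> ldirected P e I \<and> llower P e I"

definition wbelow :: "'p set \<Rightarrow> ('p \<Rightarrow> 'p \<Rightarrow> 'l::complete_lattice) \<Rightarrow> 'p \<Rightarrow> ('p \<Rightarrow> 'l)" where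
  "wbelow P e x = (\<lambda>y. Inf {limp (e x s) (I y) | I s. lideal P e I \<and> is_lsup P e I s})"

text \<open>The space X is the whole type 'a; L-subsets are functions 'a => 'l (pointwise order).\<close>
definition is_Ltop :: "('a \<Rightarrow> 'l::complete_lattice) set \<Rightarrow> bool" where
  "is_Ltop T \<longleftrightarrow> (\<forall>A\<in>T. \<forall>B\<in>T. inf A B \<in> T) \<and> (\<forall>F\<subseteq>T. Sup F \<in> T) \<and> (\<forall>a. (\<lambda>_. a) \<in> T)"

definition linterior :: "('a \<Rightarrow> 'l::complete_lattice) set \<Rightarrow> ('a \<Rightarrow> 'l) \<Rightarrow> ('a \<Rightarrow> 'l)" where
  "linterior T A = Sup {B \<in> T. B \<le> A}"

definition super_compact :: "('a \<Rightarrow> 'l::complete_lattice) set \<Rightarrow> ('a \<Rightarrow> 'l) \<Rightarrow> bool" where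
  "super_compact T A \<longleftrightarrow> lnonempty UNIV A \<and>
     (\<forall>F\<subseteq>T. lsub UNIV A (Sup F) = (SUP V\<in>F. lsub UNIV A V))"

definition SC :: "('a \<Rightarrow> 'l::complete_lattice) set \<Rightarrow> ('a \<Rightarrow> 'l) set" where
  "SC T = {A. super_compact T A}"

definition locally_super_compact :: "('a \<Rightarrow> 'l::complete_lattice) set \<Rightarrow> bool" where
  "locally_super_compact T \<longleftrightarrow>
     (\<forall>A\<in>T. A = (SUP B\<in>SC T. (\<lambda>x. inf (lsub UNIV B A) (linterior T B x))))"

text \<open>Points are maps T(X) -> L; represented extensionally (value bot off T(X)).\<close>
definition is_lpoint :: "('a \<Rightarrow> 'l::complete_lattice) set \<Rightarrow> (('a \<Rightarrow> 'l) \<Rightarrow> 'l) \<Rightarrow> bool" where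
  "is_lpoint T p \<longleftrightarrow>
     (\<forall>A\<in>T. \<forall>B\<in>T. p (inf A B) = inf (p A) (p B)) \<and>
     (\<forall>F\<subseteq>T. p (Sup F) = (SUP A\<in>F. p A)) \<and>
     (\<forall>a. p (\<lambda>_. a) = a) \<and>
     (\<forall>A. A \<notin> T \<longrightarrow> p A = bot)"

definition ptL :: "('a \<Rightarrow> 'l::complete_lattice) set \<Rightarrow> (('a \<Rightarrow> 'l) \<Rightarrow> 'l) set" where
  "ptL T = {p. is_lpoint T p}"

definition subO :: "('a \<Rightarrow> 'l::complete_lattice) set \<Rightarrow> (('a \<Rightarrow> 'l) \<Rightarrow> 'l) \<Rightarrow> (('a \<Rightarrow> 'l) \<Rightarrow> 'l) \<Rightarrow> 'l" where
  "subO T p q = (INF A\<in>T. limp (p A) (q A))"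

definition ptx :: "('a \<Rightarrow> 'l::complete_lattice) set \<Rightarrow> 'a \<Rightarrow> (('a \<Rightarrow> 'l) \<Rightarrow> 'l)" where
  "ptx T x = (\<lambda>A. if A \<in> T then A x else bot)"

end

theory Submission
  imports Defs
begin

lemma fr_inf_SUP:
  assumes F: "is_frame TYPE('l::complete_lattice)"
  shows "inf (a::'l) (SUP i\<in>I. f i) = (SUP i\<in>I. inf a (f i))"
proof -
  have "inf a (Sup (f`I)) = (SUP s\<in>f`I. inf a s)" using F unfolding is_frame_def by blast
  then show ?thesis by (simp add: image_image)
qed

lemma fr_SUP_inf:
  assumes F: "is_frame TYPE('l::complete_lattice)"
  shows "inf (SUP i\<in>I. f i) (a::'l) = (SUP i\<in>I. inf (f i) a)"
  using fr_inf_SUP[OF F, of a f I] by (simp add: inf_commute)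

lemma limp_iff:
  assumes F: "is_frame TYPE('l::complete_lattice)"
  shows "((c::'l) \<le> limp a b) = (inf c a \<le> b)"
proof
  assume "c \<le> limp a b"
  then have "inf c a \<le> inf (limp a b) a" by (rule inf_mono) simp
  also have "inf (limp a b) a = (SUP d\<in>{d. inf d a \<le> b}. inf d a)"
    unfolding limp_def using fr_SUP_inf[OF F, of "\<lambda>d. d" "{d. inf d a \<le> b}" a] by simp
  also have "\<dots> \<le> b" by (rule SUP_least) simp
  finally show "inf c a \<le> b" .
next
  assume "inf c a \<le> b" thus "c \<le> limp a b" unfolding limp_def by (simp add: Sup_upper)
qed

lemma eq_by_le:
  fixes a b :: "'l::order"
  shows "(\<And>c. (c \<le> a) = (c \<le> b)) \<Longrightarrow> a = b"
  by (metis order.antisym order_refl)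

lemma lsub_le_iff:
  assumes F: "is_frame TYPE('l::complete_lattice)"
  shows "((c::'l) \<le> lsub S A B) = (\<forall>x\<in>S. inf c (A x) \<le> B x)"
  by (simp add: lsub_def le_INF_iff limp_iff[OF F])

lemma subO_le_iff:
  assumes F: "is_frame TYPE('l::complete_lattice)"
  shows "((c::'l) \<le> subO T p q) = (\<forall>A\<in>T. inf c (p A) \<le> q A)"
  by (simp add: subO_def le_INF_iff limp_iff[OF F])

lemma limp_refl: assumes F: "is_frame TYPE('l::complete_lattice)" shows "limp (a::'l) a = top"
  using limp_iff[OF F, of top a a] by (simp add: top_le)

lemma limp_top: assumes F: "is_frame TYPE('l::complete_lattice)" shows "limp top (a::'l) = a"
  by (rule eq_by_le) (simp add: limp_iff[OF F])

lemma subO_refl: assumes F: "is_frame TYPE('l::complete_lattice)" shows "subO T p p = (top::'l)"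
  by (simp add: subO_def limp_refl[OF F])

lemma subO_trans: assumes F: "is_frame TYPE('l::complete_lattice)"
  shows "inf (subO T p q) (subO T q r) \<le> (subO T p r :: 'l)"
proof -
  have "\<forall>A\<in>T. inf (inf (subO T p q) (subO T q r)) (p A) \<le> r A"
  proof
    fix A assume A: "A \<in> T"
    have 1: "inf (subO T p q) (p A) \<le> q A" using subO_le_iff[OF F, of "subO T p q" T p q] A by simp
    have 2: "inf (subO T q r) (q A) \<le> r A" using subO_le_iff[OF F, of "subO T q r" T q r] A by simp
    have "inf (inf (subO T p q) (subO T q r)) (p A) \<le> inf (subO T q r) (inf (subO T p q) (p A))"
      by (simp add: inf.coboundedI1 inf.coboundedI2)
    also have "\<dots> \<le> inf (subO T q r) (q A)" using 1 by (simp add: inf.coboundedI2)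
    also have "\<dots> \<le> r A" by (rule 2)
    finally show "inf (inf (subO T p q) (subO T q r)) (p A) \<le> r A" .
  qed
  then show ?thesis by (simp add: subO_le_iff[OF F])
qed

lemma pt_mono: assumes "is_lpoint T p" "A \<in> T" "B \<in> T" "A \<le> B" shows "p A \<le> p B"
proof -
  have "p (inf A B) = inf (p A) (p B)" using assms unfolding is_lpoint_def by blast
  moreover have "inf A B = A" using assms(4) by (simp add: inf_absorb1)
  ultimately show ?thesis by (metis inf.cobounded2)
qed


definition tsup :: "('a \<Rightarrow> 'l::complete_lattice) set \<Rightarrow> ((('a \<Rightarrow> 'l) \<Rightarrow> 'l) \<Rightarrow> 'l) \<Rightarrow> (('a \<Rightarrow> 'l) \<Rightarrow> 'l)" where
  "tsup T I = (\<lambda>A. SUP p\<in>ptL T. inf (I p) (p A))"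

lemma tsup_pt:
  assumes F: "is_frame TYPE('l::complete_lattice)" and Tt: "is_Ltop (T::('a \<Rightarrow> 'l) set)"
    and D: "ldirected (ptL T) (subO T) I"
  shows "tsup T I \<in> ptL T"
proof -
  let ?P = "ptL T" and ?e = "subO T" and ?t = "tsup T I"
  have pts: "\<And>p. p \<in> ?P \<Longrightarrow> is_lpoint T p" by (simp add: ptL_def)
  have meet: "?t (inf A B) = inf (?t A) (?t B)" if A: "A \<in> T" and B: "B \<in> T" for A B
  proof (rule order.antisym)
    show "?t (inf A B) \<le> inf (?t A) (?t B)"
    proof (rule le_infI)
      show "?t (inf A B) \<le> ?t A" unfolding tsup_def
      proof (rule SUP_mono)
        fix p assume p: "p \<in> ?P"
        have "p (inf A B) = inf (p A) (p B)" using pts[OF p] A B unfolding is_lpoint_def by blast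
        then show "\<exists>q\<in>?P. inf (I p) (p (inf A B)) \<le> inf (I q) (q A)" using p
          by (metis inf.cobounded1 inf_mono order_refl)
      qed
      show "?t (inf A B) \<le> ?t B" unfolding tsup_def
      proof (rule SUP_mono)
        fix p assume p: "p \<in> ?P"
        have "p (inf A B) = inf (p A) (p B)" using pts[OF p] A B unfolding is_lpoint_def by blast
        then show "\<exists>q\<in>?P. inf (I p) (p (inf A B)) \<le> inf (I q) (q B)" using p
          by (metis inf.cobounded2 inf_mono order_refl)
      qed
    qed
  next
    have "inf (?t A) (?t B) = (SUP p\<in>?P. SUP q\<in>?P. inf (inf (I p) (p A)) (inf (I q) (q B)))"
      unfolding tsup_def by (simp add: fr_SUP_inf[OF F] fr_inf_SUP[OF F]) (rule SUP_commute)
    also have "\<dots> \<le> ?t (inf A B)"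
    proof (intro SUP_least)
      fix p q assume p: "p \<in> ?P" and q: "q \<in> ?P"
      have "inf (I p) (I q) \<le> (SUP z\<in>?P. inf (inf (I z) (?e p z)) (?e q z))"
        using D p q unfolding ldirected_def by blast
      note dir = this
      have "inf (inf (I p) (p A)) (inf (I q) (q B)) = inf (inf (I p) (I q)) (inf (p A) (q B))"
        by (simp add: inf_aci)
      also have "\<dots> \<le> inf (SUP z\<in>?P. inf (inf (I z) (?e p z)) (?e q z)) (inf (p A) (q B))"
        using dir by (rule inf_mono) simp
      also have "\<dots> = (SUP z\<in>?P. inf (inf (inf (I z) (?e p z)) (?e q z)) (inf (p A) (q B)))"
        by (rule fr_SUP_inf[OF F])
      also have "\<dots> \<le> ?t (inf A B)" unfolding tsup_def
      proof (rule SUP_mono)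
        fix z assume z: "z \<in> ?P"
        have zAB: "z (inf A B) = inf (z A) (z B)" using pts[OF z] A B unfolding is_lpoint_def by blast
        have 1: "inf (?e p z) (p A) \<le> z A" using subO_le_iff[OF F, of "?e p z" T p z] A by simp
        have 2: "inf (?e q z) (q B) \<le> z B" using subO_le_iff[OF F, of "?e q z" T q z] B by simp
        have "inf (inf (inf (I z) (?e p z)) (?e q z)) (inf (p A) (q B)) \<le> inf (I z) (z (inf A B))"
          unfolding zAB
        proof (intro le_infI)
          show "inf (inf (inf (I z) (?e p z)) (?e q z)) (inf (p A) (q B)) \<le> I z" by (intro le_infI1) (rule order_refl)
          have "inf (inf (inf (I z) (?e p z)) (?e q z)) (inf (p A) (q B)) \<le> inf (?e p z) (p A)"
            by (meson inf.coboundedI1 inf.coboundedI2 inf_mono order_refl)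
          then show "inf (inf (inf (I z) (?e p z)) (?e q z)) (inf (p A) (q B)) \<le> z A" using 1 by (rule order_trans)
          have "inf (inf (inf (I z) (?e p z)) (?e q z)) (inf (p A) (q B)) \<le> inf (?e q z) (q B)"
            by (meson inf.coboundedI1 inf.coboundedI2 inf_mono order_refl)
          then show "inf (inf (inf (I z) (?e p z)) (?e q z)) (inf (p A) (q B)) \<le> z B" using 2 by (rule order_trans)
        qed
        then show "\<exists>w\<in>?P. inf (inf (inf (I z) (?e p z)) (?e q z)) (inf (p A) (q B)) \<le> inf (I w) (w (inf A B))"
          using z by blast
      qed
      finally show "inf (inf (I p) (p A)) (inf (I q) (q B)) \<le> ?t (inf A B)" .
    qed
    finally show "inf (?t A) (?t B) \<le> ?t (inf A B)" .
  qed
  have join: "?t (Sup G) = (SUP A\<in>G. ?t A)" if G: "G \<subseteq> T" for G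
  proof -
    have "?t (Sup G) = (SUP p\<in>?P. inf (I p) (SUP A\<in>G. p A))"
      unfolding tsup_def using pts G unfolding is_lpoint_def by (intro SUP_cong) auto
    also have "\<dots> = (SUP p\<in>?P. SUP A\<in>G. inf (I p) (p A))" by (simp add: fr_inf_SUP[OF F])
    also have "\<dots> = (SUP A\<in>G. SUP p\<in>?P. inf (I p) (p A))" by (rule SUP_commute)
    finally show ?thesis unfolding tsup_def by simp
  qed
  have const: "?t (\<lambda>_. a) = a" for a
  proof -
    have "?t (\<lambda>_. a) = (SUP p\<in>?P. inf (I p) a)"
    proof -
      have "\<And>p. p\<in>?P \<Longrightarrow> p (\<lambda>_. a) = a" using pts unfolding is_lpoint_def by blast
      then show ?thesis unfolding tsup_def by (intro SUP_cong refl) metis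
    qed
    also have "\<dots> = inf (SUP p\<in>?P. I p) a" by (simp add: fr_SUP_inf[OF F])
    also have "(SUP p\<in>?P. I p) = top" using D unfolding ldirected_def lnonempty_def by blast
    finally show ?thesis by simp
  qed
  have off: "?t A = bot" if "A \<notin> T" for A
  proof -
    have "\<And>p. p\<in>?P \<Longrightarrow> p A = bot" using pts that unfolding is_lpoint_def by blast
    then show ?thesis unfolding tsup_def by (simp add: SUP_bot_conv) (metis inf_bot_right)
  qed
  show ?thesis unfolding ptL_def is_lpoint_def using meet join const off by blast
qed


lemma tsup_lsup:
  assumes F: "is_frame TYPE('l::complete_lattice)" and Tt: "is_Ltop (T::('a \<Rightarrow> 'l) set)"
    and D: "ldirected (ptL T) (subO T) I"
  shows "is_lsup (ptL T) (subO T) I (tsup T I)"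
  unfolding is_lsup_def
proof (intro conjI ballI tsup_pt[OF F Tt D])
  fix y assume y: "y \<in> ptL T"
  show "subO T (tsup T I) y = lsub (ptL T) I (ldown (subO T) y)"
  proof (rule eq_by_le)
    fix c :: 'l
    have "(c \<le> subO T (tsup T I) y) = (\<forall>A\<in>T. \<forall>p\<in>ptL T. inf c (inf (I p) (p A)) \<le> y A)"
      by (simp add: subO_le_iff[OF F] tsup_def fr_inf_SUP[OF F] SUP_le_iff)
    also have "\<dots> = (\<forall>p\<in>ptL T. \<forall>A\<in>T. inf (inf c (I p)) (p A) \<le> y A)"
      by (auto simp: inf_assoc)
    also have "\<dots> = (c \<le> lsub (ptL T) I (ldown (subO T) y))"
      by (simp add: lsub_le_iff[OF F] ldown_def subO_le_iff[OF F])
    finally show "(c \<le> subO T (tsup T I) y) = (c \<le> lsub (ptL T) I (ldown (subO T) y))" .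
  qed
qed

lemma lsup_unique:
  assumes F: "is_frame TYPE('l::complete_lattice)"
    and s: "is_lsup (ptL T) (subO T) I s" and s': "is_lsup (ptL T) (subO T) I s'"
  shows "s = (s' :: ('a \<Rightarrow> 'l) \<Rightarrow> 'l)"
proof -
  have le: "\<forall>A\<in>T. s A \<le> s' A" if s: "is_lsup (ptL T) (subO T) I s" and s': "is_lsup (ptL T) (subO T) I s'"
    for s s' :: "('a \<Rightarrow> 'l) \<Rightarrow> 'l"
  proof -
    have "s' \<in> ptL T" using s' unfolding is_lsup_def by blast
    then have "subO T s s' = lsub (ptL T) I (ldown (subO T) s')" using s unfolding is_lsup_def by blast
    also have "\<dots> = subO T s' s'" using s' \<open>s' \<in> ptL T\<close> unfolding is_lsup_def by metis
    also have "\<dots> = top" by (rule subO_refl[OF F])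
    finally have "top \<le> subO T s s'" by simp
    then show ?thesis by (simp add: subO_le_iff[OF F])
  qed
  have "s \<in> ptL T" "s' \<in> ptL T" using s s' unfolding is_lsup_def by blast+
  then have off: "\<And>A. A \<notin> T \<Longrightarrow> s A = bot \<and> s' A = bot" unfolding ptL_def is_lpoint_def by blast
  show ?thesis
  proof
    fix A show "s A = s' A"
      using le[OF s s'] le[OF s' s] off[of A] by (cases "A \<in> T") (auto intro: order.antisym)
  qed
qed


definition qB :: "('a \<Rightarrow> 'l::complete_lattice) set \<Rightarrow> ('a \<Rightarrow> 'l) \<Rightarrow> (('a \<Rightarrow> 'l) \<Rightarrow> 'l)" where
  "qB T B = (\<lambda>A. if A \<in> T then lsub UNIV B A else bot)"

lemma lsub_inf:
  assumes F: "is_frame TYPE('l::complete_lattice)"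
  shows "lsub S B (inf A A') = inf (lsub S B A) (lsub S B (A' :: _ \<Rightarrow> 'l))"
  by (rule eq_by_le) (auto simp: lsub_le_iff[OF F])

lemma lsub_const:
  assumes F: "is_frame TYPE('l::complete_lattice)" and B: "lnonempty UNIV B"
  shows "lsub UNIV B (\<lambda>_. a) = (a::'l)"
proof (rule eq_by_le)
  fix c
  have "(c \<le> lsub UNIV B (\<lambda>_. a)) = ((SUP x. inf c (B x)) \<le> a)"
    by (simp add: lsub_le_iff[OF F] SUP_le_iff)
  also have "(SUP x. inf c (B x)) = inf c (SUP x. B x)" by (simp add: fr_inf_SUP[OF F])
  also have "(SUP x. B x) = top" using B unfolding lnonempty_def by simp
  finally show "(c \<le> lsub UNIV B (\<lambda>_. a)) = (c \<le> a)" by simp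
qed

lemma interior_open: "is_Ltop T \<Longrightarrow> linterior T B \<in> T"
  unfolding linterior_def is_Ltop_def by auto

lemma interior_le: "linterior T B \<le> B"
  unfolding linterior_def by (auto intro: Sup_least)

lemma qB_pt:
  assumes F: "is_frame TYPE('l::complete_lattice)" and Tt: "is_Ltop (T::('a \<Rightarrow> 'l) set)"
    and B: "B \<in> SC T"
  shows "qB T B \<in> ptL T"
proof -
  have ne: "lnonempty UNIV B" and sc: "\<And>G. G \<subseteq> T \<Longrightarrow> lsub UNIV B (Sup G) = (SUP V\<in>G. lsub UNIV B V)"
    using B unfolding SC_def super_compact_def by auto
  have "\<forall>A\<in>T. \<forall>A'\<in>T. qB T B (inf A A') = inf (qB T B A) (qB T B A')"
    using Tt unfolding is_Ltop_def qB_def by (simp add: lsub_inf[OF F])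
  moreover have "\<forall>G\<subseteq>T. qB T B (Sup G) = (SUP A\<in>G. qB T B A)"
  proof (intro allI impI)
    fix G assume G: "G \<subseteq> T"
    then have "Sup G \<in> T" using Tt unfolding is_Ltop_def by blast
    then have "qB T B (Sup G) = (SUP V\<in>G. lsub UNIV B V)" unfolding qB_def using sc[OF G] by simp
    also have "\<dots> = (SUP A\<in>G. qB T B A)" using G unfolding qB_def by (intro SUP_cong) auto
    finally show "qB T B (Sup G) = (SUP A\<in>G. qB T B A)" .
  qed
  moreover have "\<forall>a. qB T B (\<lambda>_. a) = a"
    using Tt unfolding is_Ltop_def qB_def by (simp add: lsub_const[OF F ne])
  moreover have "\<forall>A. A \<notin> T \<longrightarrow> qB T B A = bot" unfolding qB_def by simp
  ultimately show ?thesis unfolding ptL_def is_lpoint_def by blast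
qed

lemma e_qB:
  assumes F: "is_frame TYPE('l::complete_lattice)" and Tt: "is_Ltop (T::('a \<Rightarrow> 'l) set)"
    and p: "p \<in> ptL T"
  shows "p (linterior T B) \<le> subO T (qB T B) p"
  unfolding subO_le_iff[OF F]
proof
  fix A assume A: "A \<in> T"
  let ?c = "lsub UNIV B A" and ?Bo = "linterior T B"
  have pp: "is_lpoint T p" using p unfolding ptL_def by simp
  have Bo: "?Bo \<in> T" by (rule interior_open[OF Tt])
  have cT: "(\<lambda>_. ?c) \<in> T" using Tt unfolding is_Ltop_def by blast
  have "inf (p ?Bo) ?c = p (inf ?Bo (\<lambda>_. ?c))"
    using pp Bo cT unfolding is_lpoint_def by metis
  also have "\<dots> \<le> p A"
  proof (rule pt_mono[OF pp _ A])
    show "inf ?Bo (\<lambda>_. ?c) \<in> T" using Bo cT Tt unfolding is_Ltop_def by blast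
    show "inf ?Bo (\<lambda>_. ?c) \<le> A"
    proof (rule le_funI)
      fix z
      have 1: "?Bo z \<le> B z" using interior_le[of T B] by (simp add: le_fun_def)
      have 2: "inf ?c (B z) \<le> A z" using lsub_le_iff[OF F, of ?c UNIV B A] by simp
      have "inf (?Bo z) ?c \<le> inf ?c (B z)" using 1 by (simp add: inf_commute le_infI1 inf_mono)
      then have "inf (?Bo z) ?c \<le> A z" using 2 by (rule order_trans)
      then show "inf ?Bo (\<lambda>_. ?c) z \<le> A z" by simp
    qed
  qed
  finally show "inf (p ?Bo) (qB T B A) \<le> p A" using A unfolding qB_def by simp
qed

lemma wbelow_lower:
  assumes F: "is_frame TYPE('l::complete_lattice)"
  shows "llower P e (wbelow P (e :: 'p \<Rightarrow> 'p \<Rightarrow> 'l) x0)"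
  unfolding llower_def
proof (intro ballI)
  fix u v assume u: "u \<in> P" and v: "v \<in> P"
  show "inf (wbelow P e x0 u) (e v u) \<le> wbelow P e x0 v"
    unfolding wbelow_def
  proof (rule Inf_greatest, clarify)
    fix I s assume I: "lideal P e I" and s: "is_lsup P e I s"
    have 1: "Inf {limp (e x0 s) (I u) |I s. lideal P e I \<and> is_lsup P e I s} \<le> limp (e x0 s) (I u)"
      using I s by (intro Inf_lower) blast
    have 2: "inf (I u) (e v u) \<le> I v" using I u v unfolding lideal_def llower_def by blast
    have 3: "inf (limp (e x0 s) (I u)) (e x0 s) \<le> I u" using limp_iff[OF F] by blast
    show "inf (Inf {limp (e x0 s) (I u) |I s. lideal P e I \<and> is_lsup P e I s}) (e v u)
          \<le> limp (e x0 s) (I v)"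
      unfolding limp_iff[OF F]
    proof -
      let ?W = "Inf {limp (e x0 s) (I u) |I s. lideal P e I \<and> is_lsup P e I s}"
      have "inf (inf ?W (e v u)) (e x0 s) \<le> inf (inf (limp (e x0 s) (I u)) (e x0 s)) (e v u)"
        using 1 by (simp add: inf.coboundedI1 inf.coboundedI2 le_infI1)
      also have "\<dots> \<le> inf (I u) (e v u)" using 3 by (rule inf_mono) simp
      also have "\<dots> \<le> I v" by (rule 2)
      finally show "inf (inf ?W (e v u)) (e x0 s) \<le> I v" .
    qed
  qed
qed


lemma lsc_at:
  assumes L: "locally_super_compact T" and A: "A \<in> T"
  shows "A x = (SUP B\<in>SC T. inf (lsub UNIV B A) (linterior T B x))"
proof -
  have eq: "A = (SUP B\<in>SC T. (\<lambda>x. inf (lsub UNIV B A) (linterior T B x)))"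
    using L A unfolding locally_super_compact_def by blast
  show ?thesis using fun_cong[OF eq, of x] by (simp only: SUP_apply)
qed

lemma wbelow_ge:
  assumes F: "is_frame TYPE('l::complete_lattice)" and Tt: "is_Ltop (T::('a \<Rightarrow> 'l) set)"
    and B: "B \<in> SC T"
  shows "linterior T B x \<le> wbelow (ptL T) (subO T) (ptx T x) (qB T B)"
  unfolding wbelow_def
proof (rule Inf_greatest, clarify)
  fix I s assume I: "lideal (ptL T) (subO T) I" and s: "is_lsup (ptL T) (subO T) I s"
  let ?Bo = "linterior T B"
  have D: "ldirected (ptL T) (subO T) I" using I unfolding lideal_def by blast
  have st: "s = tsup T I" by (rule lsup_unique[OF F s tsup_lsup[OF F Tt D]])
  have Bo: "?Bo \<in> T" by (rule interior_open[OF Tt])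
  have qBP: "qB T B \<in> ptL T" by (rule qB_pt[OF F Tt B])
  have "inf (?Bo x) (subO T (ptx T x) s) = inf (subO T (ptx T x) s) (ptx T x ?Bo)"
    using Bo unfolding ptx_def by (simp add: inf_commute)
  also have "\<dots> \<le> s ?Bo" using Bo subO_le_iff[OF F, of "subO T (ptx T x) s" T "ptx T x" s] by simp
  also have "\<dots> = (SUP p\<in>ptL T. inf (I p) (p ?Bo))" unfolding st tsup_def by simp
  also have "\<dots> \<le> I (qB T B)"
  proof (rule SUP_least)
    fix p assume p: "p \<in> ptL T"
    have "inf (I p) (p ?Bo) \<le> inf (I p) (subO T (qB T B) p)"
      using e_qB[OF F Tt p, of B] by (rule inf_mono[OF order_refl])
    also have "\<dots> \<le> I (qB T B)" using I p qBP unfolding lideal_def llower_def by blast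
    finally show "inf (I p) (p ?Bo) \<le> I (qB T B)" .
  qed
  finally show "?Bo x \<le> limp (subO T (ptx T x) s) (I (qB T B))" by (simp add: limp_iff[OF F])
qed

lemma aux_l1: "(c::'a::lattice) \<le> d \<Longrightarrow> inf (inf c y) (inf a b) \<le> inf a d"
  by (meson inf_le1 inf_le2 le_infI order_trans)

lemma aux_l2: "(c::'a::lattice) \<le> d \<Longrightarrow> inf (inf c y) (inf a b) \<le> inf b d"
  by (meson inf_le1 inf_le2 le_infI order_trans)

definition Jx :: "('a \<Rightarrow> 'l::complete_lattice) set \<Rightarrow> 'a \<Rightarrow> (('a \<Rightarrow> 'l) \<Rightarrow> 'l) \<Rightarrow> 'l" where
  "Jx T x = (\<lambda>p. SUP B\<in>SC T. inf (linterior T B x) (subO T p (qB T B)))"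

lemma J_qB:
  assumes F: "is_frame TYPE('l::complete_lattice)" and B: "B \<in> SC (T::('a \<Rightarrow> 'l) set)"
  shows "linterior T B x \<le> Jx T x (qB T B)"
  unfolding Jx_def using B by (intro SUP_upper2[of B]) (simp_all add: subO_refl[OF F])

lemma e_qq:
  assumes F: "is_frame TYPE('l::complete_lattice)" and A': "A' \<le> linterior T B"
  shows "lsub UNIV C A' \<le> subO T (qB T B) (qB T (C::'a \<Rightarrow> 'l))"
  unfolding subO_le_iff[OF F]
proof
  fix A assume A: "A \<in> T"
  have "\<forall>z. inf (inf (lsub UNIV C A') (lsub UNIV B A)) (C z) \<le> A z"
  proof
    fix z
    have 1: "inf (lsub UNIV C A') (C z) \<le> A' z" using lsub_le_iff[OF F, of "lsub UNIV C A'" UNIV C A'] by simp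
    have 2: "A' z \<le> B z" using A' interior_le[of T B] by (auto simp: le_fun_def intro: order_trans)
    have 3: "inf (lsub UNIV B A) (B z) \<le> A z" using lsub_le_iff[OF F, of "lsub UNIV B A" UNIV B A] by simp
    have "inf (inf (lsub UNIV C A') (lsub UNIV B A)) (C z) \<le> inf (lsub UNIV B A) (inf (lsub UNIV C A') (C z))"
      by (simp add: inf_aci)
    also have "\<dots> \<le> inf (lsub UNIV B A) (B z)" using 1 2 by (intro inf_mono) auto
    also have "\<dots> \<le> A z" by (rule 3)
    finally show "inf (inf (lsub UNIV C A') (lsub UNIV B A)) (C z) \<le> A z" .
  qed
  then show "inf (lsub UNIV C A') (qB T B A) \<le> qB T C A" using A unfolding qB_def
    by (simp add: lsub_le_iff[OF F])
qed


lemma J_ideal: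
  assumes F: "is_frame TYPE('l::complete_lattice)" and Tt: "is_Ltop (T::('a \<Rightarrow> 'l) set)"
    and L: "locally_super_compact T"
  shows "lideal (ptL T) (subO T) (Jx T x)"
proof -
  let ?P = "ptL T" and ?e = "subO T" and ?J = "Jx T x"
  have ne: "lnonempty ?P ?J" unfolding lnonempty_def
  proof (rule top_unique[THEN iffD1])
    have topT: "(\<lambda>_. top) \<in> T" using Tt unfolding is_Ltop_def by blast
    have "top = (SUP B\<in>SC T. inf (lsub UNIV B (\<lambda>_. top)) (linterior T B x))"
      using lsc_at[OF L topT, of x] by simp
    also have "\<dots> \<le> (SUP B\<in>SC T. ?J (qB T B))"
      by (rule SUP_mono) (meson J_qB[OF F] inf.coboundedI2)
    also have "\<dots> \<le> (SUP p\<in>?P. ?J p)"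
      by (rule SUP_mono) (meson qB_pt[OF F Tt] order_refl)
    finally show "top \<le> (SUP p\<in>?P. ?J p)" .
  qed
  have dir: "inf (?J p) (?J q) \<le> (SUP z\<in>?P. inf (inf (?J z) (?e p z)) (?e q z))"
    if p: "p \<in> ?P" and q: "q \<in> ?P" for p q
  proof -
    have "inf (?J p) (?J q) = (SUP B\<in>SC T. SUP B'\<in>SC T.
        inf (inf (linterior T B x) (?e p (qB T B))) (inf (linterior T B' x) (?e q (qB T B'))))"
      unfolding Jx_def by (simp add: fr_SUP_inf[OF F] fr_inf_SUP[OF F]) (rule SUP_commute)
    also have "\<dots> \<le> (SUP z\<in>?P. inf (inf (?J z) (?e p z)) (?e q z))"
    proof (intro SUP_least)
      fix B B' assume B: "B \<in> SC T" and B': "B' \<in> SC T"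
      let ?A = "inf (linterior T B) (linterior T B')"
      have AT: "?A \<in> T" using interior_open[OF Tt] Tt unfolding is_Ltop_def by blast
      have "inf (inf (linterior T B x) (?e p (qB T B))) (inf (linterior T B' x) (?e q (qB T B')))
          = inf (?A x) (inf (?e p (qB T B)) (?e q (qB T B')))" by (simp add: inf_aci)
      also have "\<dots> = (SUP C\<in>SC T. inf (inf (lsub UNIV C ?A) (linterior T C x)) (inf (?e p (qB T B)) (?e q (qB T B'))))"
        unfolding lsc_at[OF L AT, of x] by (rule fr_SUP_inf[OF F])
      also have "\<dots> \<le> (SUP z\<in>?P. inf (inf (?J z) (?e p z)) (?e q z))"
      proof (rule SUP_mono)
        fix C assume C: "C \<in> SC T"
        let ?c = "lsub UNIV C ?A" and ?a = "?e p (qB T B)" and ?b = "?e q (qB T B')"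
        have h1: "?c \<le> ?e (qB T B) (qB T C)" by (rule e_qq[OF F]) simp
        have h2: "?c \<le> ?e (qB T B') (qB T C)" by (rule e_qq[OF F]) simp
        have h3: "linterior T C x \<le> ?J (qB T C)" by (rule J_qB[OF F C])
        have t1: "inf ?a (?e (qB T B) (qB T C)) \<le> ?e p (qB T C)" by (rule subO_trans[OF F])
        have t2: "inf ?b (?e (qB T B') (qB T C)) \<le> ?e q (qB T C)" by (rule subO_trans[OF F])
        let ?L = "inf (inf ?c (linterior T C x)) (inf ?a ?b)"
        have "?L \<le> ?J (qB T C)" using h3 by (meson inf.coboundedI1 inf.coboundedI2)
        moreover have "?L \<le> ?e p (qB T C)"
        proof -
          have "?L \<le> inf ?a (?e (qB T B) (qB T C))" using h1 by (rule aux_l1)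
          then show ?thesis using t1 by (rule order_trans)
        qed
        moreover have "?L \<le> ?e q (qB T C)"
        proof -
          have "?L \<le> inf ?b (?e (qB T B') (qB T C))" using h2 by (rule aux_l2)
          then show ?thesis using t2 by (rule order_trans)
        qed
        ultimately have "?L \<le> inf (inf (?J (qB T C)) (?e p (qB T C))) (?e q (qB T C))" by simp
        then show "\<exists>z\<in>?P. ?L \<le> inf (inf (?J z) (?e p z)) (?e q z)" using qB_pt[OF F Tt C] by blast
      qed
      finally show "inf (inf (linterior T B x) (?e p (qB T B))) (inf (linterior T B' x) (?e q (qB T B')))
          \<le> (SUP z\<in>?P. inf (inf (?J z) (?e p z)) (?e q z))" .
    qed
    finally show ?thesis .
  qed
  have low: "inf (?J p) (?e r p) \<le> ?J r" for p r
  proof -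
    have "inf (?J p) (?e r p) = (SUP B\<in>SC T. inf (inf (linterior T B x) (?e p (qB T B))) (?e r p))"
      unfolding Jx_def by (rule fr_SUP_inf[OF F])
    also have "\<dots> \<le> ?J r" unfolding Jx_def
    proof (rule SUP_mono)
      fix B assume B: "B \<in> SC T"
      have "inf (?e r p) (?e p (qB T B)) \<le> ?e r (qB T B)" by (rule subO_trans[OF F])
      then have "inf (inf (linterior T B x) (?e p (qB T B))) (?e r p) \<le> inf (linterior T B x) (?e r (qB T B))"
        by (simp add: inf.coboundedI1 inf.coboundedI2 inf_commute inf_left_commute le_infI2)
      then show "\<exists>m\<in>SC T. inf (inf (linterior T B x) (?e p (qB T B))) (?e r p) \<le> inf (linterior T m x) (?e r (qB T m))"
        using B by blast
    qed
    finally show ?thesis .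
  qed
  show ?thesis unfolding lideal_def ldirected_def llower_def using ne dir low by blast
qed


lemma tJ:
  assumes F: "is_frame TYPE('l::complete_lattice)" and Tt: "is_Ltop (T::('a \<Rightarrow> 'l) set)"
    and L: "locally_super_compact T"
  shows "tsup T (Jx T x) = ptx T x"
proof
  fix A
  let ?P = "ptL T" and ?e = "subO T" and ?J = "Jx T x"
  show "tsup T ?J A = ptx T x A"
  proof (cases "A \<in> T")
    case False
    have "\<And>p. p\<in>?P \<Longrightarrow> p A = bot" using False unfolding ptL_def is_lpoint_def by blast
    then have "tsup T ?J A = bot" unfolding tsup_def by (simp add: SUP_bot_conv) (metis inf_bot_right)
    then show ?thesis using False unfolding ptx_def by simp
  next
    case A: True
    have "tsup T ?J A = A x"
    proof (rule order.antisym)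
      show "tsup T ?J A \<le> A x" unfolding tsup_def
      proof (rule SUP_least)
        fix p assume p: "p \<in> ?P"
        have "inf (?J p) (p A) = (SUP B\<in>SC T. inf (inf (linterior T B x) (?e p (qB T B))) (p A))"
          unfolding Jx_def by (rule fr_SUP_inf[OF F])
        also have "\<dots> \<le> A x"
        proof (rule SUP_least)
          fix B assume B: "B \<in> SC T"
          have 1: "inf (?e p (qB T B)) (p A) \<le> lsub UNIV B A"
            using subO_le_iff[OF F, of "?e p (qB T B)" T p "qB T B"] A unfolding qB_def by auto
          have 2: "inf (lsub UNIV B A) (B x) \<le> A x" using lsub_le_iff[OF F, of "lsub UNIV B A" UNIV B A] by simp
          have 3: "linterior T B x \<le> B x" using interior_le[of T B] by (simp add: le_fun_def)
          have "inf (inf (linterior T B x) (?e p (qB T B))) (p A) \<le> inf (lsub UNIV B A) (B x)"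
          proof (rule le_infI)
            show "inf (inf (linterior T B x) (?e p (qB T B))) (p A) \<le> lsub UNIV B A"
              using 1 by (meson inf_le1 inf_le2 le_infI order_trans)
            show "inf (inf (linterior T B x) (?e p (qB T B))) (p A) \<le> B x"
              using 3 by (meson inf_le1 order_trans)
          qed
          then show "inf (inf (linterior T B x) (?e p (qB T B))) (p A) \<le> A x" using 2 by (rule order_trans)
        qed
        finally show "inf (?J p) (p A) \<le> A x" .
      qed
      have "A x = (SUP B\<in>SC T. inf (lsub UNIV B A) (linterior T B x))" by (rule lsc_at[OF L A])
      also have "\<dots> \<le> tsup T ?J A" unfolding tsup_def
      proof (rule SUP_mono)
        fix B assume B: "B \<in> SC T"
        have "inf (lsub UNIV B A) (linterior T B x) \<le> inf (?J (qB T B)) (qB T B A)"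
        proof -
          have "qB T B A = lsub UNIV B A" using A by (simp add: qB_def)
          then show ?thesis using J_qB[OF F B, of x] by (metis inf_commute inf_mono order_refl)
        qed
        then show "\<exists>p\<in>?P. inf (lsub UNIV B A) (linterior T B x) \<le> inf (?J p) (p A)"
          using qB_pt[OF F Tt B] by blast
      qed
      finally show "A x \<le> tsup T ?J A" .
    qed
    then show ?thesis using A unfolding ptx_def by simp
  qed
qed

lemma ldirected_cong: "(\<And>p. p \<in> P \<Longrightarrow> D p = D' p) \<Longrightarrow> ldirected P e D = ldirected P e D'"
  unfolding ldirected_def lnonempty_def by (simp cong: SUP_cong_simp)

lemma is_lsup_cong: "(\<And>p. p \<in> P \<Longrightarrow> D p = D' p) \<Longrightarrow> is_lsup P e D s = is_lsup P e D' s"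
  unfolding is_lsup_def lsub_def by (simp cong: INF_cong_simp)

theorem proposition4p5:
  fixes T :: "('a \<Rightarrow> 'l::complete_lattice) set" and x :: 'a
  assumes "is_frame TYPE('l)"
    and "is_Ltop T"
    and "locally_super_compact T"
  shows "ldirected (ptL T) (subO T) (wbelow (ptL T) (subO T) (ptx T x))
       \<and> is_lsup (ptL T) (subO T) (wbelow (ptL T) (subO T) (ptx T x)) (ptx T x)"
proof -
  note F = assms(1) and Tt = assms(2) and L = assms(3)
  let ?P = "ptL T" and ?e = "subO T" and ?J = "Jx T x" and ?W = "wbelow (ptL T) (subO T) (ptx T x)"
  have I: "lideal ?P ?e ?J" by (rule J_ideal[OF F Tt L])
  then have D: "ldirected ?P ?e ?J" unfolding lideal_def by blast
  have S: "is_lsup ?P ?e ?J (ptx T x)" using tsup_lsup[OF F Tt D] unfolding tJ[OF F Tt L] .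
  have WJ: "?W p = ?J p" if p: "p \<in> ?P" for p
  proof (rule order.antisym)
    have "?W p \<le> limp (?e (ptx T x) (ptx T x)) (?J p)"
      unfolding wbelow_def using I S by (intro Inf_lower) blast
    then show "?W p \<le> ?J p" by (simp add: subO_refl[OF F] limp_top[OF F])
    show "?J p \<le> ?W p" unfolding Jx_def
    proof (rule SUP_least)
      fix B assume B: "B \<in> SC T"
      have qP: "qB T B \<in> ?P" by (rule qB_pt[OF F Tt B])
      have "inf (linterior T B x) (?e p (qB T B)) \<le> inf (?W (qB T B)) (?e p (qB T B))"
        using wbelow_ge[OF F Tt B, of x] by (rule inf_mono) simp
      also have "\<dots> \<le> ?W p" using wbelow_lower[OF F, of ?P ?e "ptx T x"] qP p
        unfolding llower_def by blast
      finally show "inf (linterior T B x) (?e p (qB T B)) \<le> ?W p" .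
    qed
  qed
  show ?thesis using D S ldirected_cong[of ?P ?W ?J ?e] is_lsup_cong[of ?P ?W ?J ?e] WJ by simp
qed

end
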